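(* Consider a market with $n$ goods, supplies $w_1,\dots,w_n>0$ and demand functions $x_i:(0,\infty)^n\to(0,\infty)$ satisfying (fixed spending) $\sum_i p_ix_i(p)=M$ for all $p$, for a constant $M>0$, and (WGS) for all $j\ne i$, $x_j(p)$ is non-decreasing in $p_i$. Let $\phi_j(q)=q_j|x_j(q)-w_j|$. Fix $p$ and $i$ with $x_i(p)\ne w_i$, and let $p'=(p_{-i},p_i')$ differ from $p$ only in coordinate $i$, where $p_i'>p_i$ if $x_i(p)>w_i$ and $p_i'<p_i$ if $x_i(p)<w_i$, and where the change is same-side: $x_i(p')\ge w_i$ if $x_i(p)>w_i$, and $x_i(p')\le w_i$ if $x_i(p)<w_i$. Then \[ \phi_i(p)-\phi_i(p')\ \ge\ w_i|p_i'-p_i|+\sum_{j\ne i}\big|\phi_j(p)-\phi_j(p')\big|. \] In particular $\sum_j\phi_j(p)-\sum_j\phi_j(p')\ge w_i|p_i'-p_i|$.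
   Context: $(p_{-i},p_i')$ denotes the price vector $p$ with its $i$-th entry replaced by $p_i'$. *)

theory Defs
  imports "HOL-Analysis.Analysis"
begin

text \<open>Goods are indexed by 0..n-1. A price vector is a function nat => real whose
entries on the goods are strictly positive.\<close>

definition pos_prices :: "nat \<Rightarrow> (nat \<Rightarrow> real) \<Rightarrow> bool" where
  "pos_prices n p \<longleftrightarrow> (\<forall>k<n. p k > 0)"

definition fixed_spending_wgs_market ::
  "nat \<Rightarrow> (nat \<Rightarrow> real) \<Rightarrow> real \<Rightarrow> (nat \<Rightarrow> (nat \<Rightarrow> real) \<Rightarrow> real) \<Rightarrow> bool" where
  "fixed_spending_wgs_market n w M x \<longleftrightarrow>
     M > 0 \<and> (\<forall>k<n. w k > 0) \<and>
     (\<forall>p. pos_prices n p \<longrightarrow> (\<forall>k<n. x k p > 0)) \<and>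
     (\<forall>p. pos_prices n p \<longrightarrow> (\<Sum>k<n. p k * x k p) = M) \<and>
     (\<forall>p i j t. pos_prices n p \<longrightarrow> i < n \<longrightarrow> j < n \<longrightarrow> j \<noteq> i \<longrightarrow> p i \<le> t \<longrightarrow>
        x j p \<le> x j (p(i := t)))"

definition phi :: "(nat \<Rightarrow> (nat \<Rightarrow> real) \<Rightarrow> real) \<Rightarrow> (nat \<Rightarrow> real) \<Rightarrow> nat \<Rightarrow> (nat \<Rightarrow> real) \<Rightarrow> real" where
  "phi x w j q = q j * \<bar>x j q - w j\<bar>"

end

theory Submission
  imports Defs
begin

theorem mainTheorem6:
  fixes n :: nat and w :: "nat \<Rightarrow> real" and M :: real
    and x :: "nat \<Rightarrow> (nat \<Rightarrow> real) \<Rightarrow> real"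
    and p :: "nat \<Rightarrow> real" and i :: nat and pi' :: real
  assumes mkt: "fixed_spending_wgs_market n w M x"
    and p_pos: "pos_prices n p"
    and i_lt: "i < n"
    and pi'_pos: "pi' > 0"
    and ne: "x i p \<noteq> w i"
    and up: "x i p > w i \<Longrightarrow> pi' > p i \<and> x i (p(i := pi')) \<ge> w i"
    and down: "x i p < w i \<Longrightarrow> pi' < p i \<and> x i (p(i := pi')) \<le> w i"
  shows "(phi x w i p - phi x w i (p(i := pi')) \<ge>
           w i * \<bar>pi' - p i\<bar> +
           (\<Sum>j\<in>{..<n} - {i}. \<bar>phi x w j p - phi x w j (p(i := pi'))\<bar>)) \<and>
         ((\<Sum>j<n. phi x w j p) - (\<Sum>j<n. phi x w j (p(i := pi'))) \<ge> w i * \<bar>pi' - p i\<bar>)"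
proof -
  define q where "q = p(i := pi')"
  define R where "R = {..<n} - {i}"
  have qpos: "pos_prices n q" using p_pos pi'_pos unfolding q_def pos_prices_def by auto
  have pq: "p = q(i := p i)" unfolding q_def by auto
  have M1: "(\<Sum>k<n. p k * x k p) = M" using mkt p_pos unfolding fixed_spending_wgs_market_def by blast
  have M2: "(\<Sum>k<n. q k * x k q) = M" using mkt qpos unfolding fixed_spending_wgs_market_def by blast
  have wgs: "\<And>r j t. pos_prices n r \<Longrightarrow> j < n \<Longrightarrow> j \<noteq> i \<Longrightarrow> r i \<le> t \<Longrightarrow> x j r \<le> x j (r(i := t))"
    using mkt i_lt unfolding fixed_spending_wgs_market_def by blast
  have fin: "finite R" unfolding R_def by auto
  have iin: "i \<in> {..<n}" using i_lt by auto
  have s1: "(\<Sum>k<n. p k * x k p) = p i * x i p + (\<Sum>k\<in>R. p k * x k p)"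
    unfolding R_def using sum.remove[OF _ iin] by auto
  have s2: "(\<Sum>k<n. q k * x k q) = pi' * x i q + (\<Sum>k\<in>R. p k * x k q)"
    unfolding R_def using sum.remove[OF _ iin, of "\<lambda>k. q k * x k q"] by (auto simp: q_def)
  define S where "S = (\<Sum>j\<in>R. p j * (x j q - x j p))"
  have S: "S = p i * x i p - pi' * x i q"
    using s1 s2 M1 M2 unfolding S_def by (simp add: sum_subtractf right_diff_distrib)
  define D where "D = (\<Sum>j\<in>R. \<bar>p j * (x j q - x j p)\<bar>)"
  have ppos: "\<And>j. j \<in> R \<Longrightarrow> p j > 0" using p_pos unfolding R_def pos_prices_def by auto
  have qj: "\<And>j. j \<in> R \<Longrightarrow> q j = p j" unfolding R_def q_def by auto
  have key: "phi x w i p - phi x w i q = w i * \<bar>pi' - p i\<bar> + D"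
  proof (cases "x i p > w i")
    case True
    with up have a: "pi' > p i" "x i q \<ge> w i" by (auto simp: q_def)
    have "\<And>j. j \<in> R \<Longrightarrow> x j p \<le> x j q"
      using wgs[OF p_pos] a unfolding R_def q_def by auto
    hence "\<And>j. j \<in> R \<Longrightarrow> \<bar>p j * (x j q - x j p)\<bar> = p j * (x j q - x j p)"
      using ppos by (metis abs_of_nonneg diff_ge_0_iff_ge less_imp_le mult_nonneg_nonneg)
    hence "D = S" unfolding D_def S_def by (intro sum.cong) auto
    thus ?thesis using S a True unfolding phi_def by (simp add: q_def algebra_simps)
  next
    case False
    hence F: "x i p < w i" using ne by auto
    with down have a: "pi' < p i" "x i q \<le> w i" by (auto simp: q_def)
    have "\<And>j. j \<in> R \<Longrightarrow> x j q \<le> x j p"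
    proof -
      fix j assume j: "j \<in> R"
      have "x j q \<le> x j (q(i := p i))"
        using wgs[OF qpos, of j "p i"] j a unfolding R_def q_def by auto
      thus "x j q \<le> x j p" using pq by simp
    qed
    hence "\<And>j. j \<in> R \<Longrightarrow> \<bar>p j * (x j q - x j p)\<bar> = - (p j * (x j q - x j p))"
      using ppos by (metis abs_of_nonpos diff_le_0_iff_le less_imp_le mult_nonneg_nonpos)
    hence "D = - S" unfolding D_def S_def
      by (simp add: sum_negf[symmetric])
    thus ?thesis using S a F unfolding phi_def by (simp add: q_def algebra_simps)
  qed
  have bnd: "(\<Sum>j\<in>R. \<bar>phi x w j p - phi x w j q\<bar>) \<le> D"
    unfolding D_def
  proof (rule sum_mono)
    fix j assume j: "j \<in> R"
    have "\<bar>phi x w j p - phi x w j q\<bar> = p j * \<bar>\<bar>x j p - w j\<bar> - \<bar>x j q - w j\<bar>\<bar>"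
      unfolding phi_def using qj[OF j] ppos[OF j] by (simp add: right_diff_distrib[symmetric] abs_mult)
    also have "\<dots> \<le> p j * \<bar>x j q - x j p\<bar>"
      using ppos[OF j] by (intro mult_left_mono) auto
    also have "\<dots> = \<bar>p j * (x j q - x j p)\<bar>" using ppos[OF j] by (simp add: abs_mult)
    finally show "\<bar>phi x w j p - phi x w j q\<bar> \<le> \<bar>p j * (x j q - x j p)\<bar>" .
  qed
  have part1: "phi x w i p - phi x w i q \<ge> w i * \<bar>pi' - p i\<bar> + (\<Sum>j\<in>R. \<bar>phi x w j p - phi x w j q\<bar>)"
    using key bnd by linarith
  have t1: "(\<Sum>j<n. phi x w j p) = phi x w i p + (\<Sum>j\<in>R. phi x w j p)"
    unfolding R_def using sum.remove[OF _ iin] by auto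
  have t2: "(\<Sum>j<n. phi x w j q) = phi x w i q + (\<Sum>j\<in>R. phi x w j q)"
    unfolding R_def using sum.remove[OF _ iin] by auto
  have "(\<Sum>j\<in>R. phi x w j p) - (\<Sum>j\<in>R. phi x w j q) = (\<Sum>j\<in>R. phi x w j p - phi x w j q)"
    by (simp add: sum_subtractf)
  also have "\<dots> \<ge> - (\<Sum>j\<in>R. \<bar>phi x w j p - phi x w j q\<bar>)"
    by (simp add: sum_negf[symmetric]) (intro sum_mono, auto)
  finally have "(\<Sum>j\<in>R. phi x w j p) - (\<Sum>j\<in>R. phi x w j q) \<ge> - (\<Sum>j\<in>R. \<bar>phi x w j p - phi x w j q\<bar>)" .
  hence part2: "(\<Sum>j<n. phi x w j p) - (\<Sum>j<n. phi x w j q) \<ge> w i * \<bar>pi' - p i\<bar>"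
    using part1 t1 t2 by linarith
  show ?thesis using part1 part2 unfolding q_def R_def by simp
qed

end
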